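(* Let $K$ be a field and let $f\colon\mathbb Z^k\to K$ be a hypergeometric term on $\mathbb Z^k$ that is weakly factorial on a polyhedral region $\mathcal R$. Then there exist finitely many polyhedral regions $\mathcal R_1,\dots,\mathcal R_m$ such that $\mathcal R=\mathcal R_1\cup\cdots\cup\mathcal R_m$ and $f$ is factorial on each $\mathcal R_i$.
   Context: A hypergeometric term on $\mathbb Z^k$ over $K$ is a function $f\colon\mathbb Z^k\to K$ such that for each $i$ there are nonzero polynomials $A_i,B_i\in K[\vec z]$ with $A_i(\vec z)f(\vec z)=B_i(\vec z)f(\vec z+\vec e_i)$ for all $\vec z\in\mathbb Z^k$. A half-space is $\{\vec z:\vec v\cdot\vec z>n\}$ ($\vec v\in\mathbb Z^k$, $n\in\mathbb Z$); a polyhedral region is $\mathbb Z^k$ or a finite intersection of half-spaces. Notation: $\mathop{\mathrm{gp}}_{j=a}^{b}g(j)=\prod_{j=a}^{b-1}g(j)$ if $b\ge a$ and $=\prod_{j=b}^{a-1}g(j)^{-1}$ if $b<a$. $f$ is weakly factorial on $\mathcal R$ if there exist a finite $V\subset\mathbb Z^k$, univariate $a_{\vec v},b_{\vec v}\in K[z]$ ($\vec v\in V$) and $\vec z_0\in\mathcal R$ such that for all $\vec z\in\mathcal R$: $f(\vec z)=\prod_{\vec v\in V}\mathop{\mathrm{gp}}_{j=\vec z_0\cdot\vec v}^{\vec z\cdot\vec v}a_{\vec v}(j)/b_{\vec v}(j)$, and all $a_{\vec v}(j),b_{\vec v}(j)$ occurring in these products are nonzero. $f$ is factorial on $\mathcal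 R$ if there exist a finite $V\subset\mathbb Z^k$ and, for $\vec v\in V$, univariate $a_{\vec v},b_{\vec v}\in K[z]$ and integers $n_{\vec v}$ such that for all $\vec z\in\mathcal R$: $f(\vec z)=\prod_{\vec v\in V}\prod_{j=1}^{\vec v\cdot\vec z+n_{\vec v}}a_{\vec v}(j)/b_{\vec v}(j)$; each $\vec v\cdot\vec z+n_{\vec v}$ is a positive integer; and $a_{\vec v}(j),b_{\vec v}(j)\ne0$ for $1\le j\le\vec v\cdot\vec z+n_{\vec v}$. *)

theory Defs
  imports "HOL-Analysis.Finite_Cartesian_Product" "HOL-Computational_Algebra.Polynomial"
begin

definition dotZ :: "int ^ 'k::finite \<Rightarrow> int ^ 'k \<Rightarrow> int" where
  "dotZ v z = (\<Sum>i\<in>UNIV. v $ i * z $ i)"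

definition unitZ :: "'k::finite \<Rightarrow> int ^ 'k" where
  "unitZ i = (\<chi> j. if j = i then 1 else 0)"

text \<open>A multivariate polynomial in K[z_1..z_k], given by a finite set M of exponent vectors
  and coefficients c; evaluated at an integer point.\<close>
definition mpoly_eval :: "('k::finite \<Rightarrow> nat) set \<Rightarrow> (('k \<Rightarrow> nat) \<Rightarrow> 'a::field) \<Rightarrow> int ^ 'k \<Rightarrow> 'a" where
  "mpoly_eval M c z = (\<Sum>m\<in>M. c m * (\<Prod>i\<in>UNIV. (of_int (z $ i)) ^ (m i)))"

definition mpoly_nonzero :: "('k::finite \<Rightarrow> nat) set \<Rightarrow> (('k \<Rightarrow> nat) \<Rightarrow> 'a::field) \<Rightarrow> bool" where
  "mpoly_nonzero M c \<longleftrightarrow> finite M \<and> (\<exists>m\<in>M. c m \<noteq> 0)"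

definition hypergeometric_term :: "(int ^ 'k::finite \<Rightarrow> 'a::field) \<Rightarrow> bool" where
  "hypergeometric_term f \<longleftrightarrow>
     (\<forall>i::'k. \<exists>MA cA MB cB. mpoly_nonzero MA cA \<and> mpoly_nonzero MB cB \<and>
        (\<forall>z. mpoly_eval MA cA z * f z = mpoly_eval MB cB z * f (z + unitZ i)))"

definition halfspace :: "int ^ 'k::finite \<Rightarrow> int \<Rightarrow> (int ^ 'k) set" where
  "halfspace v n = {z. dotZ v z > n}"

definition polyhedral_region :: "(int ^ 'k::finite) set \<Rightarrow> bool" where
  "polyhedral_region R \<longleftrightarrow> R = UNIV \<or>
     (\<exists>H. finite H \<and> H \<noteq> {} \<and> R = (\<Inter>(v, n)\<in>H. halfspace v n))"

definition gp :: "int \<Rightarrow> int \<Rightarrow> (int \<Rightarrow> 'a::field) \<Rightarrow> 'a" where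
  "gp a b g = (if a \<le> b then (\<Prod>j\<in>{a..<b}. g j) else (\<Prod>j\<in>{b..<a}. inverse (g j)))"

definition weakly_factorial_on :: "(int ^ 'k::finite \<Rightarrow> 'a::field) \<Rightarrow> (int ^ 'k) set \<Rightarrow> bool" where
  "weakly_factorial_on f R \<longleftrightarrow>
     (\<exists>V (a :: int ^ 'k \<Rightarrow> 'a poly) (b :: int ^ 'k \<Rightarrow> 'a poly) z0.
        finite V \<and> z0 \<in> R \<and>
        (\<forall>z\<in>R. f z = (\<Prod>v\<in>V. gp (dotZ z0 v) (dotZ z v)
                           (\<lambda>j. poly (a v) (of_int j) / poly (b v) (of_int j))) \<and>
                (\<forall>v\<in>V. \<forall>j\<in>{min (dotZ z0 v) (dotZ z v)..<max (dotZ z0 v) (dotZ z v)}.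
                    poly (a v) (of_int j) \<noteq> 0 \<and> poly (b v) (of_int j) \<noteq> 0)))"

definition factorial_on :: "(int ^ 'k::finite \<Rightarrow> 'a::field) \<Rightarrow> (int ^ 'k) set \<Rightarrow> bool" where
  "factorial_on f R \<longleftrightarrow>
     (\<exists>V (a :: int ^ 'k \<Rightarrow> 'a poly) (b :: int ^ 'k \<Rightarrow> 'a poly) (n :: int ^ 'k \<Rightarrow> int).
        finite V \<and>
        (\<forall>z\<in>R. f z = (\<Prod>v\<in>V. \<Prod>j\<in>{1..dotZ v z + n v}.
                            poly (a v) (of_int j) / poly (b v) (of_int j)) \<and>
                (\<forall>v\<in>V. dotZ v z + n v \<ge> 1 \<and>
                   (\<forall>j\<in>{1..dotZ v z + n v}.
                      poly (a v) (of_int j) \<noteq> 0 \<and> poly (b v) (of_int j) \<noteq> 0))))"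

end

theory Submission imports Defs begin

lemma dotZ_comm: "dotZ a b = dotZ b a"
  unfolding dotZ_def by (simp add: mult.commute)

lemma dotZ_neg: "dotZ (-v) z = - dotZ v z"
  unfolding dotZ_def by (simp add: sum_negf)

lemma gp_pos:
  fixes a b :: "'a::field poly"
  assumes "c < t" "\<forall>j\<in>{c..<t}. poly a (of_int j) \<noteq> 0 \<and> poly b (of_int j) \<noteq> 0"
  shows "gp c t (\<lambda>j. poly a (of_int j) / poly b (of_int j)) =
     (\<Prod>j\<in>{1..t-c}. poly (pcompose a [:of_int c - 1, 1:]) (of_int j) / poly (pcompose b [:of_int c - 1, 1:]) (of_int j))"
    and "\<forall>j\<in>{1..t-c}. poly (pcompose a [:of_int c - 1, 1:]) (of_int j) \<noteq> 0 \<and> poly (pcompose b [:of_int c - 1, 1:]) (of_int j) \<noteq> 0"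
proof -
  have im: "{c..<t} = (\<lambda>j. j + c - 1) ` {1..t-c}"
    by (auto simp: image_def intro!: bexI[where x="_ - c + 1"])
  have inj: "inj_on (\<lambda>j. j + c - 1) {1..t-c}" by (auto simp: inj_on_def)
  show "gp c t (\<lambda>j. poly a (of_int j) / poly b (of_int j)) =
     (\<Prod>j\<in>{1..t-c}. poly (pcompose a [:of_int c - 1, 1:]) (of_int j) / poly (pcompose b [:of_int c - 1, 1:]) (of_int j))"
    unfolding gp_def using assms(1) by (simp add: im prod.reindex[OF inj] poly_pcompose algebra_simps)
  show "\<forall>j\<in>{1..t-c}. poly (pcompose a [:of_int c - 1, 1:]) (of_int j) \<noteq> 0 \<and> poly (pcompose b [:of_int c - 1, 1:]) (of_int j) \<noteq> 0"
  proof
    fix j assume j: "j \<in> {1..t-c}"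
    hence "j + c - 1 \<in> {c..<t}" by auto
    with assms(2) have "poly a (of_int (j + c - 1)) \<noteq> 0 \<and> poly b (of_int (j + c - 1)) \<noteq> 0" by blast
    thus "poly (pcompose a [:of_int c - 1, 1:]) (of_int j) \<noteq> 0 \<and> poly (pcompose b [:of_int c - 1, 1:]) (of_int j) \<noteq> 0"
      by (auto simp: poly_pcompose algebra_simps)
  qed
qed

lemma gp_neg:
  fixes a b :: "'a::field poly"
  assumes "t < c" "\<forall>j\<in>{t..<c}. poly a (of_int j) \<noteq> 0 \<and> poly b (of_int j) \<noteq> 0"
  shows "gp c t (\<lambda>j. poly a (of_int j) / poly b (of_int j)) =
     (\<Prod>j\<in>{1..c-t}. poly (pcompose b [:of_int c, -1:]) (of_int j) / poly (pcompose a [:of_int c, -1:]) (of_int j))"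
    and "\<forall>j\<in>{1..c-t}. poly (pcompose b [:of_int c, -1:]) (of_int j) \<noteq> 0 \<and> poly (pcompose a [:of_int c, -1:]) (of_int j) \<noteq> 0"
proof -
  have im: "{t..<c} = (\<lambda>j. c - j) ` {1..c-t}"
    by (auto simp: image_def intro!: bexI[where x="c - _"])
  have inj: "inj_on (\<lambda>j. c - j) {1..c-t}" by (auto simp: inj_on_def)
  show "gp c t (\<lambda>j. poly a (of_int j) / poly b (of_int j)) =
     (\<Prod>j\<in>{1..c-t}. poly (pcompose b [:of_int c, -1:]) (of_int j) / poly (pcompose a [:of_int c, -1:]) (of_int j))"
  proof -
    have "gp c t (\<lambda>j. poly a (of_int j) / poly b (of_int j)) = (\<Prod>j\<in>{t..<c}. poly b (of_int j) / poly a (of_int j))"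
      unfolding gp_def using assms(1) by simp
    also have "\<dots> = (\<Prod>j\<in>{1..c-t}. poly b (of_int (c - j)) / poly a (of_int (c - j)))"
      unfolding im prod.reindex[OF inj] by simp
    finally show ?thesis by (simp add: poly_pcompose)
  qed
  show "\<forall>j\<in>{1..c-t}. poly (pcompose b [:of_int c, -1:]) (of_int j) \<noteq> 0 \<and> poly (pcompose a [:of_int c, -1:]) (of_int j) \<noteq> 0"
  proof
    fix j assume j: "j \<in> {1..c-t}"
    hence "c - j \<in> {t..<c}" by auto
    with assms(2) have "poly a (of_int (c - j)) \<noteq> 0 \<and> poly b (of_int (c - j)) \<noteq> 0" by blast
    thus "poly (pcompose b [:of_int c, -1:]) (of_int j) \<noteq> 0 \<and> poly (pcompose a [:of_int c, -1:]) (of_int j) \<noteq> 0"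
      by (auto simp: poly_pcompose algebra_simps)
  qed
qed

lemma polyhedral_inter:
  assumes "polyhedral_region R" "finite H'"
  shows "polyhedral_region (R \<inter> (\<Inter>(v, n)\<in>H'. halfspace v n))"
  using assms unfolding polyhedral_region_def
proof (elim disjE exE conjE)
  assume "R = UNIV" "finite H'"
  thus "R \<inter> (\<Inter>(v, n)\<in>H'. halfspace v n) = UNIV \<or> (\<exists>H. finite H \<and> H \<noteq> {} \<and> R \<inter> (\<Inter>(v, n)\<in>H'. halfspace v n) = (\<Inter>(v, n)\<in>H. halfspace v n))"
    by (cases "H' = {}") auto
next
  fix H assume "finite H'" "finite H" "H \<noteq> {}" "R = (\<Inter>(v, n)\<in>H. halfspace v n)"
  thus "R \<inter> (\<Inter>(v, n)\<in>H'. halfspace v n) = UNIV \<or> (\<exists>H. finite H \<and> H \<noteq> {} \<and> R \<inter> (\<Inter>(v, n)\<in>H'. halfspace v n) = (\<Inter>(v, n)\<in>H. halfspace v n))"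
    by (intro disjI2 exI[of _ "H \<union> H'"]) auto
qed

lemma mem_halfspace: "z \<in> halfspace v n \<longleftrightarrow> n < dotZ z v"
  by (simp add: halfspace_def dotZ_comm)

lemma dotZ_neg2: "dotZ z (-v) = - dotZ z v"
  using dotZ_neg[of v z] by (simp add: dotZ_comm)

theorem lemmaB25:
  fixes f :: "int ^ 'k::finite \<Rightarrow> 'a::field" and R :: "(int ^ 'k) set"
  assumes "hypergeometric_term f"
    and "polyhedral_region R"
    and "weakly_factorial_on f R"
  shows "\<exists>Rs :: (int ^ 'k) set list.
           R = \<Union>(set Rs) \<and> (\<forall>Ri\<in>set Rs. polyhedral_region Ri \<and> factorial_on f Ri)"
proof -
  obtain V and a b :: "int ^ 'k \<Rightarrow> 'a poly" and z0 where finV: "finite V" and z0: "z0 \<in> R" and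
    W: "\<forall>z\<in>R. f z = (\<Prod>v\<in>V. gp (dotZ z0 v) (dotZ z v)
                           (\<lambda>j. poly (a v) (of_int j) / poly (b v) (of_int j))) \<and>
                (\<forall>v\<in>V. \<forall>j\<in>{min (dotZ z0 v) (dotZ z v)..<max (dotZ z0 v) (dotZ z v)}.
                    poly (a v) (of_int j) \<noteq> 0 \<and> poly (b v) (of_int j) \<noteq> 0)"
    using assms(3) unfolding weakly_factorial_on_def by blast
  have rep: "\<And>z. z \<in> R \<Longrightarrow> f z = (\<Prod>v\<in>V. gp (dotZ z0 v) (dotZ z v)
                           (\<lambda>j. poly (a v) (of_int j) / poly (b v) (of_int j)))"
    using W by blast
  have nz: "\<And>z v j. z \<in> R \<Longrightarrow> v \<in> V \<Longrightarrow> j \<in> {min (dotZ z0 v) (dotZ z v)..<max (dotZ z0 v) (dotZ z v)} \<Longrightarrow>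
                    poly (a v) (of_int j) \<noteq> 0 \<and> poly (b v) (of_int j) \<noteq> 0"
    using W by blast
  define c where "c v = dotZ z0 v" for v
  define Hv where "Hv \<sigma> v = (if \<sigma> v = 1 then {(v, c v)} else if \<sigma> v = -1 then {(-v, -c v)}
       else {(v, c v - 1), (-v, -c v - 1)})" for \<sigma> :: "int ^ 'k \<Rightarrow> int" and v
  define Reg where "Reg \<sigma> = R \<inter> (\<Inter>(w,n)\<in>(\<Union>v\<in>V. Hv \<sigma> v). halfspace w n)" for \<sigma>
  define S where "S = PiE V (\<lambda>_. {-1,0,1::int})"
  have memReg: "z \<in> Reg \<sigma> \<longleftrightarrow> z \<in> R \<and> (\<forall>v\<in>V. (\<sigma> v = 1 \<longrightarrow> dotZ z v > c v) \<and> (\<sigma> v = -1 \<longrightarrow> dotZ z v < c v)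
     \<and> (\<sigma> v \<noteq> 1 \<and> \<sigma> v \<noteq> -1 \<longrightarrow> dotZ z v = c v))" for z \<sigma>
  proof -
    have e1: "z \<in> (\<Inter>(w,n)\<in>(\<Union>v\<in>V. Hv \<sigma> v). halfspace w n) \<longleftrightarrow> (\<forall>v\<in>V. \<forall>p\<in>Hv \<sigma> v. snd p < dotZ z (fst p))"
      by (simp add: mem_halfspace case_prod_beta)
    have e2: "(\<forall>p\<in>Hv \<sigma> v. snd p < dotZ z (fst p)) \<longleftrightarrow> (\<sigma> v = 1 \<longrightarrow> dotZ z v > c v) \<and> (\<sigma> v = -1 \<longrightarrow> dotZ z v < c v)
     \<and> (\<sigma> v \<noteq> 1 \<and> \<sigma> v \<noteq> -1 \<longrightarrow> dotZ z v = c v)" for v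
    proof -
      consider "\<sigma> v = 1" | "\<sigma> v = -1" | "\<sigma> v \<noteq> 1" "\<sigma> v \<noteq> -1" by blast
      thus ?thesis
      proof cases
        case 1
        hence "Hv \<sigma> v = {(v, c v)}" unfolding Hv_def by simp
        thus ?thesis using 1 by simp
      next
        case 2
        hence "Hv \<sigma> v = {(-v, - c v)}" unfolding Hv_def by simp
        thus ?thesis using 2 by (simp add: dotZ_neg2)
      next
        case 3
        hence "Hv \<sigma> v = {(v, c v - 1), (-v, -c v - 1)}" by (simp add: Hv_def)
        moreover have "\<And>x y::int. (x - 1 < y \<and> -x - 1 < -y) = (y = x)" by arith
        ultimately show ?thesis using 3 by (simp add: dotZ_neg2)
      qed
    qed
    show ?thesis unfolding Reg_def Int_iff e1 e2 by (rule refl)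
  qed
  have finS: "finite S" unfolding S_def using finV by (simp add: finite_PiE)
  from finite_list[OF finite_imageI[OF finS]] obtain Rs where Rs: "set Rs = Reg ` S" ..
  have cover: "R = \<Union>(Reg ` S)"
  proof
    show "R \<subseteq> \<Union>(Reg ` S)"
    proof
      fix z assume z: "z \<in> R"
      define \<sigma> where "\<sigma> = restrict (\<lambda>v. sgn (dotZ z v - c v)) V"
      have "\<sigma> \<in> S" unfolding S_def \<sigma>_def by (auto simp: sgn_if)
      moreover have "z \<in> Reg \<sigma>" unfolding memReg \<sigma>_def using z by (simp add: sgn_if)
      ultimately show "z \<in> \<Union>(Reg ` S)" by blast
    qed
  next
    show "\<Union>(Reg ` S) \<subseteq> R" unfolding Reg_def by blast
  qed
  have finH: "finite (Hv \<sigma> v)" for \<sigma> v unfolding Hv_def by simp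
  have poly: "polyhedral_region (Reg \<sigma>)" for \<sigma>
    unfolding Reg_def by (rule polyhedral_inter[OF assms(2)]) (intro finite_UN_I finV finH)
  have fact: "factorial_on f (Reg \<sigma>)" for \<sigma>
  proof -
    define V0 where "V0 = {v\<in>V. \<sigma> v = 1 \<or> \<sigma> v = -1}"
    define wv where "wv v = (if \<sigma> v = 1 then v else -v)" for v
    define A where "A v = (if \<sigma> v = 1 then a v \<circ>\<^sub>p [:of_int (c v) - 1, 1:] else b v \<circ>\<^sub>p [:of_int (c v), -1:])" for v
    define B where "B v = (if \<sigma> v = 1 then b v \<circ>\<^sub>p [:of_int (c v) - 1, 1:] else a v \<circ>\<^sub>p [:of_int (c v), -1:])" for v
    define cnt where "cnt v z = (if \<sigma> v = 1 then dotZ z v - c v else c v - dotZ z v)" for v z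
    define a' where "a' w = (\<Prod>v\<in>{v\<in>V0. wv v = w}. A v)" for w
    define b' where "b' w = (\<Prod>v\<in>{v\<in>V0. wv v = w}. B v)" for w
    define n' where "n' w = - dotZ z0 w" for w
    have finV0: "finite V0" using finV unfolding V0_def by simp
    have finG: "finite {v\<in>V0. wv v = w}" for w using finV0 by simp
    have cnt_eq: "dotZ (wv v) z + n' (wv v) = cnt v z" if "v \<in> V0" for v z
      using that unfolding wv_def n'_def cnt_def V0_def c_def
      by (auto simp: dotZ_neg dotZ_neg2 dotZ_comm)
    have cnt_pos: "cnt v z \<ge> 1" if "z \<in> Reg \<sigma>" "v \<in> V0" for v z
      using that unfolding memReg cnt_def V0_def by auto
    have per: "gp (c v) (dotZ z v) (\<lambda>j. poly (a v) (of_int j) / poly (b v) (of_int j)) =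
           (\<Prod>j\<in>{1..cnt v z}. poly (A v) (of_int j) / poly (B v) (of_int j)) \<and>
           (\<forall>j\<in>{1..cnt v z}. poly (A v) (of_int j) \<noteq> 0 \<and> poly (B v) (of_int j) \<noteq> 0)"
      if z: "z \<in> Reg \<sigma>" and v: "v \<in> V0" for v z
    proof -
      have zR: "z \<in> R" and vV: "v \<in> V" using z v by (auto simp: memReg V0_def)
      show ?thesis
      proof (cases "\<sigma> v = 1")
        case True
        hence lt: "c v < dotZ z v" using z vV by (auto simp: memReg)
        have h: "\<forall>j\<in>{c v..<dotZ z v}. poly (a v) (of_int j) \<noteq> 0 \<and> poly (b v) (of_int j) \<noteq> 0"
          using nz[OF zR vV] lt unfolding c_def by auto
        show ?thesis using gp_pos[OF lt h] True unfolding A_def B_def cnt_def by simp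
      next
        case False
        hence s: "\<sigma> v = -1" using v by (auto simp: V0_def)
        hence lt: "dotZ z v < c v" using z vV by (auto simp: memReg)
        have h: "\<forall>j\<in>{dotZ z v..<c v}. poly (a v) (of_int j) \<noteq> 0 \<and> poly (b v) (of_int j) \<noteq> 0"
          using nz[OF zR vV] lt unfolding c_def by auto
        show ?thesis using gp_neg[OF lt h] False unfolding A_def B_def cnt_def by simp
      qed
    qed
    have grp: "cnt v z = dotZ w z + n' w" if "v \<in> {v\<in>V0. wv v = w}" for v w z
      using cnt_eq[of v z] that by auto
    show ?thesis unfolding factorial_on_def
    proof (rule exI[of _ "wv ` V0"], rule exI[of _ a'], rule exI[of _ b'], rule exI[of _ n'], rule conjI, rule_tac [2] ballI, rule_tac [2] conjI)
      show "finite (wv ` V0)" using finV0 by simp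
    next
      fix z assume z: "z \<in> Reg \<sigma>"
      have zR: "z \<in> R" using z by (simp add: memReg)
      have "f z = (\<Prod>v\<in>V. gp (c v) (dotZ z v) (\<lambda>j. poly (a v) (of_int j) / poly (b v) (of_int j)))"
        using rep[OF zR] by (simp add: c_def)
      also have "\<dots> = (\<Prod>v\<in>V0. gp (c v) (dotZ z v) (\<lambda>j. poly (a v) (of_int j) / poly (b v) (of_int j)))"
      proof (rule prod.mono_neutral_right[OF finV])
        show "V0 \<subseteq> V" by (auto simp: V0_def)
        show "\<forall>i\<in>V - V0. gp (c i) (dotZ z i) (\<lambda>j. poly (a i) (of_int j) / poly (b i) (of_int j)) = 1"
          using z by (auto simp: V0_def memReg gp_def)
      qed
      also have "\<dots> = (\<Prod>v\<in>V0. \<Prod>j\<in>{1..cnt v z}. poly (A v) (of_int j) / poly (B v) (of_int j))"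
        using per[OF z] by simp
      also have "\<dots> = (\<Prod>w\<in>wv ` V0. \<Prod>v\<in>{v\<in>V0. wv v = w}. \<Prod>j\<in>{1..cnt v z}. poly (A v) (of_int j) / poly (B v) (of_int j))"
        by (rule prod.image_gen[OF finV0])
      also have "\<dots> = (\<Prod>w\<in>wv ` V0. \<Prod>v\<in>{v\<in>V0. wv v = w}. \<Prod>j\<in>{1..dotZ w z + n' w}. poly (A v) (of_int j) / poly (B v) (of_int j))"
        using grp by (intro prod.cong refl) auto
      also have "\<dots> = (\<Prod>w\<in>wv ` V0. \<Prod>j\<in>{1..dotZ w z + n' w}. \<Prod>v\<in>{v\<in>V0. wv v = w}. poly (A v) (of_int j) / poly (B v) (of_int j))"
        by (intro prod.cong refl prod.swap)
      also have "\<dots> = (\<Prod>w\<in>wv ` V0. \<Prod>j\<in>{1..dotZ w z + n' w}. poly (a' w) (of_int j) / poly (b' w) (of_int j))"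
        unfolding a'_def b'_def poly_prod by (simp add: prod_dividef)
      finally show "f z = (\<Prod>w\<in>wv ` V0. \<Prod>j\<in>{1..dotZ w z + n' w}. poly (a' w) (of_int j) / poly (b' w) (of_int j))" .
    next
      fix z assume z: "z \<in> Reg \<sigma>"
      show "\<forall>w\<in>wv ` V0. 1 \<le> dotZ w z + n' w \<and> (\<forall>j\<in>{1..dotZ w z + n' w}. poly (a' w) (of_int j) \<noteq> 0 \<and> poly (b' w) (of_int j) \<noteq> 0)"
      proof
        fix w assume "w \<in> wv ` V0"
        then obtain v0 where v0: "v0 \<in> V0" "w = wv v0" by blast
        show "1 \<le> dotZ w z + n' w \<and> (\<forall>j\<in>{1..dotZ w z + n' w}. poly (a' w) (of_int j) \<noteq> 0 \<and> poly (b' w) (of_int j) \<noteq> 0)"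
        proof (intro conjI ballI)
          show "1 \<le> dotZ w z + n' w" using cnt_eq[OF v0(1), of z] cnt_pos[OF z v0(1)] v0(2) by simp
        next
          fix j assume j: "j \<in> {1..dotZ w z + n' w}"
          have "\<forall>v\<in>{v\<in>V0. wv v = w}. poly (A v) (of_int j) \<noteq> 0 \<and> poly (B v) (of_int j) \<noteq> 0"
          proof
            fix v assume v: "v \<in> {v\<in>V0. wv v = w}"
            have "j \<in> {1..cnt v z}" using j grp[OF v] by simp
            thus "poly (A v) (of_int j) \<noteq> 0 \<and> poly (B v) (of_int j) \<noteq> 0" using per[OF z] v by blast
          qed
          thus "poly (a' w) (of_int j) \<noteq> 0" "poly (b' w) (of_int j) \<noteq> 0"
            unfolding a'_def b'_def poly_prod using finG by (auto simp: prod_zero_iff)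
        qed
      qed
    qed
  qed
  show ?thesis
    by (intro exI[of _ Rs]) (use Rs cover poly fact in auto)
qed

end
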